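(* Let $R$ be a discrete valuation ring with field of fractions $K$ and uniformizer $\pi$, $V$ a finite-dimensional $K$-vector space, and $L,M$ lattices of $V$. Then $L\cap M\subset m_-(L,M)\subset m_+(L,M)\subset L+M$.
   Context: A lattice of $V$ is a free $R$-submodule $L$ with $K\otimes_R L\to V$ an isomorphism. $m_-(L,M)=\sum_{n\in\mathbb Z}(\pi^nL\cap\pi^{-n}M)$ (the $R$-submodule generated by these) and $m_+(L,M)=\bigcap_{n\in\mathbb Z}(\pi^nL+\pi^{-n}M)$. *)

theory Defs
  imports Complex_Main
begin

definition discrete_valuation :: "('k::field \<Rightarrow> int) \<Rightarrow> bool" where
  "discrete_valuation v \<longleftrightarrow>
     (\<forall>x y. x \<noteq> 0 \<longrightarrow> y \<noteq> 0 \<longrightarrow> v (x * y) = v x + v y) \<and>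
     (\<forall>x y. x \<noteq> 0 \<longrightarrow> y \<noteq> 0 \<longrightarrow> x + y \<noteq> 0 \<longrightarrow> v (x + y) \<ge> min (v x) (v y)) \<and>
     (\<forall>n. \<exists>x. x \<noteq> 0 \<and> v x = n)"

text \<open>R is a discrete valuation ring whose field of fractions is K (the ambient field type):
  R is the valuation ring of a discrete valuation of K.\<close>
definition is_dvr_of :: "'k::field set \<Rightarrow> bool" where
  "is_dvr_of R \<longleftrightarrow> (\<exists>v. discrete_valuation v \<and> R = {x. x = 0 \<or> v x \<ge> 0})"

definition is_uniformizer :: "'k::field set \<Rightarrow> 'k \<Rightarrow> bool" where
  "is_uniformizer R p \<longleftrightarrow> p \<in> R \<and>
     {x \<in> R. \<not> (x \<noteq> 0 \<and> inverse x \<in> R)} = {p * r | r. r \<in> R}"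

definition rspan :: "'k::field set \<Rightarrow> ('k \<Rightarrow> 'v::ab_group_add \<Rightarrow> 'v) \<Rightarrow> 'v set \<Rightarrow> 'v set" where
  "rspan R scale S = {(\<Sum>x\<in>F. scale (c x) x) | F c. finite F \<and> F \<subseteq> S \<and> (\<forall>x\<in>F. c x \<in> R)}"

text \<open>A lattice: a free R-submodule L such that K \<otimes>_R L \<rightarrow> V is an isomorphism,
  i.e. L is the R-span of a K-basis of V.\<close>
definition is_lattice :: "'k::field set \<Rightarrow> ('k \<Rightarrow> 'v::ab_group_add \<Rightarrow> 'v) \<Rightarrow> 'v set \<Rightarrow> bool" where
  "is_lattice R scale L \<longleftrightarrow>
     (\<exists>B. \<not> module.dependent scale B \<and> module.span scale B = UNIV \<and> L = rspan R scale B)"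

definition smul_set :: "('k \<Rightarrow> 'v \<Rightarrow> 'v) \<Rightarrow> 'k \<Rightarrow> 'v set \<Rightarrow> 'v set" where
  "smul_set scale a L = (\<lambda>x. scale a x) ` L"

definition set_plus :: "'v::plus set \<Rightarrow> 'v set \<Rightarrow> 'v set" where
  "set_plus A B = {x + y | x y. x \<in> A \<and> y \<in> B}"

definition m_minus :: "'k::field set \<Rightarrow> ('k \<Rightarrow> 'v::ab_group_add \<Rightarrow> 'v) \<Rightarrow> 'k \<Rightarrow> 'v set \<Rightarrow> 'v set \<Rightarrow> 'v set" where
  "m_minus R scale p L M =
     rspan R scale (\<Union>n::int. smul_set scale (p powi n) L \<inter> smul_set scale (p powi (-n)) M)"

definition m_plus :: "('k::field \<Rightarrow> 'v::ab_group_add \<Rightarrow> 'v) \<Rightarrow> 'k \<Rightarrow> 'v set \<Rightarrow> 'v set \<Rightarrow> 'v set" where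
  "m_plus scale p L M =
     (\<Inter>n::int. set_plus (smul_set scale (p powi n) L) (smul_set scale (p powi (-n)) M))"

end

theory Submission
  imports Defs
begin

definition subm :: "'k::field set \<Rightarrow> ('k \<Rightarrow> 'v::ab_group_add \<Rightarrow> 'v) \<Rightarrow> 'v set \<Rightarrow> bool" where
  "subm R scale S \<longleftrightarrow> 0 \<in> S \<and> (\<forall>x\<in>S. \<forall>y\<in>S. x + y \<in> S) \<and> (\<forall>r\<in>R. \<forall>x\<in>S. scale r x \<in> S)"

lemma rspan_le:
  assumes "subm R scale S" "T \<subseteq> S"
  shows "rspan R scale T \<subseteq> S"
proof
  fix y assume "y \<in> rspan R scale T"
  then obtain F c where y: "y = (\<Sum>x\<in>F. scale (c x) x)" and F: "finite F" "F \<subseteq> T" "\<forall>x\<in>F. c x \<in> R"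
    unfolding rspan_def by blast
  have "(\<Sum>x\<in>F. scale (c x) x) \<in> S" using F
  proof (induction F rule: finite_induct)
    case empty then show ?case using assms(1) by (simp add: subm_def)
  next
    case (insert a F)
    then show ?case using assms unfolding subm_def by (simp add: subset_iff)
  qed
  then show "y \<in> S" using y by simp
qed

lemma rspan_base:
  assumes "module scale" "1 \<in> R" "x \<in> T"
  shows "x \<in> rspan R scale T"
proof -
  interpret module scale by fact
  have "x = (\<Sum>y\<in>{x}. scale ((\<lambda>_. 1) y) y)" by simp
  then show ?thesis unfolding rspan_def using assms
    by (intro CollectI exI[of _ "{x}"] exI[of _ "\<lambda>_. 1"]) auto
qed

lemma rspan_subm:
  assumes "module scale" "0 \<in> R" "\<forall>a\<in>R. \<forall>b\<in>R. a + b \<in> R" "\<forall>a\<in>R. \<forall>b\<in>R. a * b \<in> R"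
  shows "subm R scale (rspan R scale T)"
proof -
  interpret module scale by fact
  have z: "0 \<in> rspan R scale T" unfolding rspan_def by (rule CollectI, rule exI[of _ "{}"]) auto
  have a: "y1 + y2 \<in> rspan R scale T" if h1: "y1 \<in> rspan R scale T" and h2: "y2 \<in> rspan R scale T" for y1 y2
  proof -
    obtain F1 c1 where y1: "y1 = (\<Sum>x\<in>F1. scale (c1 x) x)" and F1: "finite F1" "F1 \<subseteq> T" "\<forall>x\<in>F1. c1 x \<in> R"
      using h1 unfolding rspan_def by auto
    obtain F2 c2 where y2: "y2 = (\<Sum>x\<in>F2. scale (c2 x) x)" and F2: "finite F2" "F2 \<subseteq> T" "\<forall>x\<in>F2. c2 x \<in> R"
      using h2 unfolding rspan_def by auto
    define d1 where "d1 x = (if x \<in> F1 then c1 x else 0)" for x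
    define d2 where "d2 x = (if x \<in> F2 then c2 x else 0)" for x
    have e1: "(\<Sum>x\<in>F1 \<union> F2. scale (d1 x) x) = y1"
      unfolding y1 by (rule sum.mono_neutral_cong_right) (auto simp: d1_def F1 F2)
    have e2: "(\<Sum>x\<in>F1 \<union> F2. scale (d2 x) x) = y2"
      unfolding y2 by (rule sum.mono_neutral_cong_right) (auto simp: d2_def F1 F2)
    have "y1 + y2 = (\<Sum>x\<in>F1 \<union> F2. scale (d1 x + d2 x) x)"
      by (simp add: scale_left_distrib sum.distrib e1 e2)
    moreover have "\<forall>x\<in>F1 \<union> F2. d1 x + d2 x \<in> R"
      using F1 F2 assms(2,3) by (auto simp: d1_def d2_def)
    ultimately show ?thesis unfolding rspan_def using F1 F2
      by (intro CollectI exI[of _ "F1 \<union> F2"] exI[of _ "\<lambda>x. d1 x + d2 x"]) auto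
  qed
  have s: "scale r y \<in> rspan R scale T" if hr: "r \<in> R" and hy: "y \<in> rspan R scale T" for r y
  proof -
    obtain F c where y: "y = (\<Sum>x\<in>F. scale (c x) x)" and F: "finite F" "F \<subseteq> T" "\<forall>x\<in>F. c x \<in> R"
      using hy unfolding rspan_def by auto
    have "scale r y = (\<Sum>x\<in>F. scale (r * c x) x)"
      by (simp add: y scale_sum_right)
    then show ?thesis unfolding rspan_def using F hr assms(4)
      by (intro CollectI exI[of _ F] exI[of _ "\<lambda>x. r * c x"]) auto
  qed
  show ?thesis unfolding subm_def using z a s by blast
qed

lemma smul_subm:
  assumes "module scale" "subm R scale S"
  shows "subm R scale (smul_set scale a S)"
proof -
  interpret module scale by fact
  show ?thesis using assms(2) unfolding subm_def smul_set_def
  proof (intro conjI ballI)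
    assume h: "0 \<in> S \<and> (\<forall>x\<in>S. \<forall>y\<in>S. x + y \<in> S) \<and> (\<forall>r\<in>R. \<forall>x\<in>S. scale r x \<in> S)"
    show "0 \<in> scale a ` S" using h by (metis image_eqI scale_zero_right)
    fix x y assume "x \<in> scale a ` S" "y \<in> scale a ` S"
    then obtain x' y' where "x = scale a x'" "y = scale a y'" "x' \<in> S" "y' \<in> S" by blast
    then show "x + y \<in> scale a ` S" using h by (metis image_eqI scale_right_distrib)
  next
    assume h: "0 \<in> S \<and> (\<forall>x\<in>S. \<forall>y\<in>S. x + y \<in> S) \<and> (\<forall>r\<in>R. \<forall>x\<in>S. scale r x \<in> S)"
    fix r x assume "r \<in> R" "x \<in> scale a ` S"
    then obtain x' where "x = scale a x'" "x' \<in> S" by blast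
    moreover have "scale r (scale a x') = scale a (scale r x')" by (simp add: mult.commute)
    moreover have "scale r x' \<in> S" using h \<open>r \<in> R\<close> \<open>x' \<in> S\<close> by blast
    moreover have "scale a (scale r x') = scale r (scale a x')" by (simp add: mult.commute)
    ultimately show "scale r x \<in> scale a ` S" by (metis rev_image_eqI)
  qed
qed

lemma plus_subm:
  assumes "module scale" "subm R scale A" "subm R scale B"
  shows "subm R scale (set_plus A B)"
proof -
  interpret module scale by fact
  show ?thesis using assms(2,3) unfolding subm_def set_plus_def
  proof (intro conjI ballI)
    show "0 \<in> {x + y |x y. x \<in> A \<and> y \<in> B}" using assms(2,3) unfolding subm_def by force
    fix x y assume "x \<in> {x + y |x y. x \<in> A \<and> y \<in> B}" "y \<in> {x + y |x y. x \<in> A \<and> y \<in> B}"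
    then obtain a1 b1 a2 b2 where "x = a1 + b1" "y = a2 + b2" "a1 \<in> A" "a2 \<in> A" "b1 \<in> B" "b2 \<in> B" by blast
    moreover have "a1 + b1 + (a2 + b2) = (a1 + a2) + (b1 + b2)" by (simp add: algebra_simps)
    ultimately show "x + y \<in> {x + y |x y. x \<in> A \<and> y \<in> B}" using assms(2,3) unfolding subm_def by blast
  next
    fix r x assume "r \<in> R" "x \<in> {x + y |x y. x \<in> A \<and> y \<in> B}"
    then obtain a b where "x = a + b" "a \<in> A" "b \<in> B" by blast
    then show "scale r x \<in> {x + y |x y. x \<in> A \<and> y \<in> B}" using assms(2,3) \<open>r \<in> R\<close>
      unfolding subm_def by (metis (mono_tags, lifting) CollectI scale_right_distrib)
  qed
qed

lemma smul_mono:
  assumes "module scale" "subm R scale S" "(p::'k::field) \<noteq> 0" "n \<le> k"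
    "\<forall>m::nat. p ^ m \<in> R"
  shows "smul_set scale (p powi k) S \<subseteq> smul_set scale (p powi n) S"
proof
  interpret module scale by fact
  fix y assume "y \<in> smul_set scale (p powi k) S"
  then obtain x where x: "y = scale (p powi k) x" "x \<in> S" unfolding smul_set_def by blast
  have "k = n + int (nat (k - n))" using assms(4) by simp
  then have "p powi k = p powi n * p ^ nat (k - n)"
    using assms(3) by (metis power_int_add power_int_of_nat)
  then have "y = scale (p powi n) (scale (p ^ nat (k - n)) x)" using x by simp
  moreover have "scale (p ^ nat (k - n)) x \<in> S" using assms(2,5) x(2) unfolding subm_def by blast
  ultimately show "y \<in> smul_set scale (p powi n) S" unfolding smul_set_def by blast
qed

theorem proposition1p2p1:
  fixes R :: "'k::field set" and p :: 'k
    and scale :: "'k \<Rightarrow> 'v::ab_group_add \<Rightarrow> 'v"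
    and L M :: "'v set"
  assumes "is_dvr_of R"
    and "is_uniformizer R p"
    and "\<exists>Bas. finite_dimensional_vector_space scale Bas"
    and "is_lattice R scale L" and "is_lattice R scale M"
  shows "L \<inter> M \<subseteq> m_minus R scale p L M \<and> m_minus R scale p L M \<subseteq> m_plus scale p L M
         \<and> m_plus scale p L M \<subseteq> set_plus L M"
proof -
  obtain Bas where "finite_dimensional_vector_space scale Bas" using assms(3) by blast
  then interpret finite_dimensional_vector_space scale Bas .
  have md: "module scale" by unfold_locales
  obtain v where dv: "discrete_valuation v" and Rdef: "R = {x. x = 0 \<or> v x \<ge> 0}"
    using assms(1) unfolding is_dvr_of_def by blast
  have vmul: "\<And>x y. x \<noteq> 0 \<Longrightarrow> y \<noteq> 0 \<Longrightarrow> v (x * y) = v x + v y"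
    and vadd: "\<And>x y. x \<noteq> 0 \<Longrightarrow> y \<noteq> 0 \<Longrightarrow> x + y \<noteq> 0 \<Longrightarrow> v (x + y) \<ge> min (v x) (v y)"
    and vsurj: "\<And>n. \<exists>x. x \<noteq> 0 \<and> v x = n"
    using dv unfolding discrete_valuation_def by blast+
  have v1: "v 1 = 0" using vmul[of 1 1] by simp
  have R0: "0 \<in> R" and R1: "1 \<in> R" using v1 Rdef by auto
  have Radd: "\<forall>a\<in>R. \<forall>b\<in>R. a + b \<in> R"
  proof (intro ballI)
    fix a b assume "a \<in> R" "b \<in> R"
    then show "a + b \<in> R" unfolding Rdef using vadd[of a b] by (cases "a = 0"; cases "b = 0"; cases "a + b = 0") auto
  qed
  have Rmul: "\<forall>a\<in>R. \<forall>b\<in>R. a * b \<in> R"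
  proof (intro ballI)
    fix a b assume "a \<in> R" "b \<in> R"
    then show "a * b \<in> R" unfolding Rdef using vmul[of a b] by (cases "a = 0"; cases "b = 0") auto
  qed
  have pR: "p \<in> R" and un: "{x \<in> R. \<not> (x \<noteq> 0 \<and> inverse x \<in> R)} = {p * r | r. r \<in> R}"
    using assms(2) unfolding is_uniformizer_def by blast+
  have ppow: "\<forall>m::nat. p ^ m \<in> R"
  proof
    fix m show "p ^ m \<in> R" by (induction m) (use R1 pR Rmul in auto)
  qed
  have p0: "p \<noteq> 0"
  proof
    assume "p = 0"
    obtain x where x: "x \<noteq> 0" "v x = 1" using vsurj by blast
    have "v (x * inverse x) = 0" using x v1 by simp
    then have "v (inverse x) = -1" using vmul[of x "inverse x"] x by simp
    then have "inverse x \<notin> R" using x unfolding Rdef by auto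
    moreover have "x \<in> R" using x Rdef by auto
    ultimately have "x \<in> {p * r | r. r \<in> R}" using un by blast
    then show False using \<open>p = 0\<close> x by auto
  qed
  obtain BL where L: "L = rspan R scale BL" using assms(4) unfolding is_lattice_def by blast
  obtain BM where M: "M = rspan R scale BM" using assms(5) unfolding is_lattice_def by blast
  have sL: "subm R scale L" unfolding L by (rule rspan_subm[OF md R0 Radd Rmul])
  have sM: "subm R scale M" unfolding M by (rule rspan_subm[OF md R0 Radd Rmul])
  have part1: "L \<inter> M \<subseteq> m_minus R scale p L M"
  proof
    fix x assume "x \<in> L \<inter> M"
    then have "x \<in> smul_set scale (p powi 0) L \<inter> smul_set scale (p powi (-0)) M"
      unfolding smul_set_def by simp
    then have "x \<in> (\<Union>n::int. smul_set scale (p powi n) L \<inter> smul_set scale (p powi (-n)) M)" by blast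
    then show "x \<in> m_minus R scale p L M" unfolding m_minus_def by (rule rspan_base[OF md R1])
  qed
  have part2: "m_minus R scale p L M \<subseteq> m_plus scale p L M"
    unfolding m_plus_def
  proof (rule INT_greatest)
    fix n :: int
    let ?S = "set_plus (smul_set scale (p powi n) L) (smul_set scale (p powi (-n)) M)"
    have sS: "subm R scale ?S"
      by (rule plus_subm[OF md smul_subm[OF md sL] smul_subm[OF md sM]])
    have "(\<Union>k::int. smul_set scale (p powi k) L \<inter> smul_set scale (p powi (-k)) M) \<subseteq> ?S"
    proof (rule UN_least)
      fix k :: int
      show "smul_set scale (p powi k) L \<inter> smul_set scale (p powi (-k)) M \<subseteq> ?S"
      proof
        fix x assume x: "x \<in> smul_set scale (p powi k) L \<inter> smul_set scale (p powi (-k)) M"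
        have z1: "0 \<in> smul_set scale (p powi n) L" using smul_subm[OF md sL] unfolding subm_def by blast
        have z2: "0 \<in> smul_set scale (p powi (-n)) M" using smul_subm[OF md sM] unfolding subm_def by blast
        show "x \<in> ?S"
        proof (cases "n \<le> k")
          case True
          then have "x \<in> smul_set scale (p powi n) L" using smul_mono[OF md sL p0 True ppow] x by blast
          then show ?thesis unfolding set_plus_def using z2 by (metis (mono_tags, lifting) CollectI add_0_right)
        next
          case False
          then have "-n \<le> -k" by simp
          then have "x \<in> smul_set scale (p powi (-n)) M" using smul_mono[OF md sM p0 _ ppow] x by blast
          then show ?thesis unfolding set_plus_def using z1 by (metis (mono_tags, lifting) CollectI add_0_left)
        qed
      qed
    qed
    then show "m_minus R scale p L M \<subseteq> ?S" unfolding m_minus_def by (rule rspan_le[OF sS])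
  qed
  have part3: "m_plus scale p L M \<subseteq> set_plus L M"
  proof -
    have "m_plus scale p L M \<subseteq> set_plus (smul_set scale (p powi 0) L) (smul_set scale (p powi (-0)) M)"
      unfolding m_plus_def by (rule INT_lower) simp
    also have "\<dots> = set_plus L M" unfolding smul_set_def by simp
    finally show ?thesis .
  qed
  show ?thesis using part1 part2 part3 by blast
qed

end
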